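(* Let $L>0$, $N\ge 1$, let $v_\textup{d}>0$ be a constant, and let $K:\mathbb{R}\to\mathbb{R}$ satisfy the following: the support of $K$ is $[0,R]$ with $0<R<L$; $K\in C^2(0,R)$ with $K,K''\in L^\infty(0,R)$; $K(z)>0$ and $K'(z)<0$ for $z\in(0,R)$; $K(0)=K(R)=0$ and $K(0^+):=\lim_{z\to0^+}K(z)>0$. Consider $N$ pedestrians on the periodic domain $[0,L)$ (positions taken modulo $L$) with positions $X^1_t,\dots,X^N_t$ evolving by \[ \dot X^i_t=v_\textup{d}-\sum_{j=1}^N K(X^j_t-X^i_t),\qquad i=1,\dots,N, \] where each difference $X^j_t-X^i_t$ is taken modulo $L$ in $[0,L)$. Let $\bar X^1<\dots<\bar X^N$ (modulo $L$) be an equispaced lattice, i.e. $|\bar X^j-\bar X^i|=(j-i)L/N$, and set $X^i_t=\bar X^i+wt$. Then this translating equispaced lattice is a stable solution of the system (with respect to small perturbations of the positions, in the linearized sense) for \[ w=v_\textup{d}-\sum_{h=1}^{N-1}K\!\left(h\frac{L}{N}\right). \] Moreover, if $R>L/N$, it is also attractive (small perturbations, modulo rigid translations of the whole lattice, decay to zero).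
   Context: The lattice configuration corresponds to the discrete measure $\epsilon_t=\sum_{i=1}^N\delta_{X^i_t}$, which is a translation $\epsilon_t(x)=\bar\epsilon(x-wt)$ of the equispaced configuration. *)

theory Defs
  imports "HOL-Analysis.Analysis"
begin

definition pmod :: "real \<Rightarrow> real \<Rightarrow> real" where
  "pmod x L = x - L * of_int \<lfloor>x / L\<rfloor>"

text \<open>Derivative of K used in the linearization: K' on the open interval (0,R),
  and 0 elsewhere (K vanishes identically on (R,L); at the points 0 and R K need not
  be differentiable).\<close>
definition lin_coef :: "(real \<Rightarrow> real) \<Rightarrow> real \<Rightarrow> real \<Rightarrow> real" where
  "lin_coef K R z = (if 0 < z \<and> z < R then deriv K z else 0)"

definition lin_sol ::
  "(real \<Rightarrow> real) \<Rightarrow> real \<Rightarrow> real \<Rightarrow> nat \<Rightarrow> (nat \<Rightarrow> real) \<Rightarrow> (real \<Rightarrow> nat \<Rightarrow> real) \<Rightarrow> bool" where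
  "lin_sol K R L N Xbar y \<longleftrightarrow>
     (\<forall>t\<ge>0. \<forall>i<N. ((\<lambda>s. y s i) has_real_derivative
        (- (\<Sum>j<N. lin_coef K R (pmod (Xbar j - Xbar i) L) * (y t j - y t i))))
        (at t within {0..}))"

definition lin_stable ::
  "(real \<Rightarrow> real) \<Rightarrow> real \<Rightarrow> real \<Rightarrow> nat \<Rightarrow> (nat \<Rightarrow> real) \<Rightarrow> bool" where
  "lin_stable K R L N Xbar \<longleftrightarrow>
     (\<forall>\<epsilon>>0. \<exists>\<delta>>0. \<forall>y. lin_sol K R L N Xbar y \<and> (\<forall>i<N. \<bar>y 0 i\<bar> < \<delta>)
        \<longrightarrow> (\<forall>t\<ge>0. \<forall>i<N. \<bar>y t i\<bar> < \<epsilon>))"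

definition lin_attractive ::
  "(real \<Rightarrow> real) \<Rightarrow> real \<Rightarrow> real \<Rightarrow> nat \<Rightarrow> (nat \<Rightarrow> real) \<Rightarrow> bool" where
  "lin_attractive K R L N Xbar \<longleftrightarrow>
     (\<forall>y. lin_sol K R L N Xbar y \<longrightarrow>
        (\<exists>c. \<forall>i<N. ((\<lambda>t. y t i) \<longlongrightarrow> c) at_top))"

end

theory Submission imports Defs begin

lemma decr_lemma:
  fixes f f' :: "real \<Rightarrow> real"
  assumes d: "\<And>t. t \<ge> 0 \<Longrightarrow> (f has_real_derivative f' t) (at t within {0..})"
    and n: "\<And>t. t \<ge> 0 \<Longrightarrow> f' t \<le> 0" and s: "0 \<le> s" "s \<le> t"
  shows "f t \<le> f s"
proof (rule DERIV_nonpos_imp_decreasing_open[OF s(2)])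
  fix x assume x: "s < x" "x < t"
  then have "x \<in> interior {0::real..}" using s by auto
  then have "at x within {0..} = at x" by (rule at_within_interior)
  then show "\<exists>y. DERIV f x :> y \<and> y \<le> 0" using d[of x] n[of x] x s by auto
next
  have "\<forall>x\<in>{0..}. continuous (at x within {0..}) f"
    using d by (meson DERIV_continuous atLeast_iff)
  then have "continuous_on {0..} f" by (simp add: continuous_on_eq_continuous_within)
  then show "continuous_on {s..t} f" by (rule continuous_on_subset) (use s in auto)
qed

lemma quad_id:
  fixes c :: "nat \<Rightarrow> nat \<Rightarrow> real" and x :: "nat \<Rightarrow> real"
  assumes row: "\<And>i. i<N \<Longrightarrow> (\<Sum>j<N. c i j) = S"
    and col: "\<And>j. j<N \<Longrightarrow> (\<Sum>i<N. c i j) = S"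
  shows "(\<Sum>i<N. 2 * x i * (\<Sum>j<N. c i j * (x j - x i))) = - (\<Sum>i<N. \<Sum>j<N. c i j * (x j - x i)^2)"
proof -
  define P where "P = (\<Sum>i<N. \<Sum>j<N. c i j * x i * x j)"
  have A: "(\<Sum>i<N. \<Sum>j<N. c i j * (x j)^2) = S * (\<Sum>i<N. (x i)^2)"
  proof -
    have "(\<Sum>i<N. \<Sum>j<N. c i j * (x j)^2) = (\<Sum>j<N. (\<Sum>i<N. c i j) * (x j)^2)"
      by (subst sum.swap) (simp add: sum_distrib_right)
    also have "\<dots> = (\<Sum>j<N. S * (x j)^2)" using col by simp
    finally show ?thesis by (simp add: sum_distrib_left)
  qed
  have B: "(\<Sum>i<N. \<Sum>j<N. c i j * (x i)^2) = S * (\<Sum>i<N. (x i)^2)"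
  proof -
    have "(\<Sum>i<N. \<Sum>j<N. c i j * (x i)^2) = (\<Sum>i<N. (\<Sum>j<N. c i j) * (x i)^2)"
      by (simp add: sum_distrib_right)
    also have "\<dots> = (\<Sum>i<N. S * (x i)^2)" using row by simp
    finally show ?thesis by (simp add: sum_distrib_left)
  qed
  have L: "(\<Sum>i<N. 2 * x i * (\<Sum>j<N. c i j * (x j - x i))) = 2 * P - 2 * (\<Sum>i<N. \<Sum>j<N. c i j * (x i)^2)"
  proof -
    have "(\<Sum>i<N. 2 * x i * (\<Sum>j<N. c i j * (x j - x i))) = (\<Sum>i<N. \<Sum>j<N. 2 * (c i j * x i * x j) - 2 * (c i j * (x i)^2))"
      by (simp add: sum_distrib_left algebra_simps power2_eq_square)
    also have "\<dots> = 2 * P - 2 * (\<Sum>i<N. \<Sum>j<N. c i j * (x i)^2)"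
      by (simp add: sum_subtractf sum_distrib_left P_def)
    finally show ?thesis .
  qed
  have Rr: "(\<Sum>i<N. \<Sum>j<N. c i j * (x j - x i)^2) = (\<Sum>i<N. \<Sum>j<N. c i j * (x j)^2) - 2 * P + (\<Sum>i<N. \<Sum>j<N. c i j * (x i)^2)"
  proof -
    have "(\<Sum>i<N. \<Sum>j<N. c i j * (x j - x i)^2) = (\<Sum>i<N. \<Sum>j<N. (c i j * (x j)^2 - 2 * (c i j * x i * x j)) + c i j * (x i)^2)"
      by (simp add: power2_diff algebra_simps)
    also have "\<dots> = (\<Sum>i<N. \<Sum>j<N. c i j * (x j)^2) - 2 * P + (\<Sum>i<N. \<Sum>j<N. c i j * (x i)^2)"
      by (simp add: sum_subtractf sum.distrib sum_distrib_left P_def)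
    finally show ?thesis .
  qed
  show ?thesis using L Rr A B by simp
qed

lemma mean_id:
  fixes c :: "nat \<Rightarrow> nat \<Rightarrow> real" and x :: "nat \<Rightarrow> real"
  assumes row: "\<And>i. i<N \<Longrightarrow> (\<Sum>j<N. c i j) = S"
    and col: "\<And>j. j<N \<Longrightarrow> (\<Sum>i<N. c i j) = S"
  shows "(\<Sum>i<N. \<Sum>j<N. c i j * (x j - x i)) = 0"
proof -
  have "(\<Sum>i<N. \<Sum>j<N. c i j * (x j - x i)) = (\<Sum>i<N. \<Sum>j<N. c i j * x j) - (\<Sum>i<N. \<Sum>j<N. c i j * x i)"
    by (simp add: sum_subtractf algebra_simps)
  also have "(\<Sum>i<N. \<Sum>j<N. c i j * x j) = (\<Sum>j<N. (\<Sum>i<N. c i j) * x j)"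
    by (subst sum.swap) (simp add: sum_distrib_right)
  also have "\<dots> = (\<Sum>j<N. S * x j)" using col by simp
  also have "(\<Sum>i<N. \<Sum>j<N. c i j * x i) = (\<Sum>i<N. (\<Sum>j<N. c i j) * x i)"
    by (simp add: sum_distrib_right)
  also have "\<dots> = (\<Sum>i<N. S * x i)" using row by simp
  finally show ?thesis by simp
qed

lemma energy_deriv:
  fixes c :: "nat \<Rightarrow> nat \<Rightarrow> real" and y :: "real \<Rightarrow> nat \<Rightarrow> real"
  assumes row: "\<And>i. i<N \<Longrightarrow> (\<Sum>j<N. c i j) = S"
    and col: "\<And>j. j<N \<Longrightarrow> (\<Sum>i<N. c i j) = S"
    and ode: "\<And>t i. t \<ge> 0 \<Longrightarrow> i < N \<Longrightarrow> ((\<lambda>s. y s i) has_real_derivative (\<Sum>j<N. c i j * (y t j - y t i))) (at t within {0..})"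
    and t: "t \<ge> 0"
  shows "((\<lambda>s. \<Sum>i<N. (y s i)^2) has_real_derivative (- (\<Sum>i<N. \<Sum>j<N. c i j * (y t j - y t i)^2))) (at t within {0..})"
proof -
  have "((\<lambda>s. \<Sum>i<N. (y s i)^2) has_real_derivative (\<Sum>i<N. 2 * y t i * (\<Sum>j<N. c i j * (y t j - y t i)))) (at t within {0..})"
  proof (rule DERIV_sum)
    fix i assume "i \<in> {..<N}"
    then have "i < N" by simp
    from ode[OF t this] show "((\<lambda>s. (y s i)^2) has_real_derivative 2 * y t i * (\<Sum>j<N. c i j * (y t j - y t i))) (at t within {0..})"
      by (auto intro!: derivative_eq_intros)
  qed
  then show ?thesis using quad_id[OF row col, of "y t"] by simp
qed

lemma mean_deriv:
  fixes c :: "nat \<Rightarrow> nat \<Rightarrow> real" and y :: "real \<Rightarrow> nat \<Rightarrow> real"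
  assumes row: "\<And>i. i<N \<Longrightarrow> (\<Sum>j<N. c i j) = S"
    and col: "\<And>j. j<N \<Longrightarrow> (\<Sum>i<N. c i j) = S"
    and ode: "\<And>t i. t \<ge> 0 \<Longrightarrow> i < N \<Longrightarrow> ((\<lambda>s. y s i) has_real_derivative (\<Sum>j<N. c i j * (y t j - y t i))) (at t within {0..})"
    and t: "t \<ge> 0"
  shows "(\<Sum>i<N. y t i) = (\<Sum>i<N. y 0 i)"
proof -
  have d: "\<And>t. t \<ge> 0 \<Longrightarrow> ((\<lambda>s. \<Sum>i<N. y s i) has_real_derivative 0) (at t within {0..})"
  proof -
    fix t :: real assume t: "t \<ge> 0"
    have "((\<lambda>s. \<Sum>i<N. y s i) has_real_derivative (\<Sum>i<N. \<Sum>j<N. c i j * (y t j - y t i))) (at t within {0..})"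
      by (rule DERIV_sum) (use ode t in auto)
    then show "((\<lambda>s. \<Sum>i<N. y s i) has_real_derivative 0) (at t within {0..})"
      using mean_id[OF row col, of "y t"] by simp
  qed
  have d2: "\<And>t. t \<ge> 0 \<Longrightarrow> ((\<lambda>s. - (\<Sum>i<N. y s i)) has_real_derivative 0) (at t within {0..})"
    using d by (metis DERIV_minus neg_0_equal_iff_equal)
  have "(\<Sum>i<N. y t i) \<le> (\<Sum>i<N. y 0 i)" by (rule decr_lemma[OF d]) (use t in auto)
  moreover have "- (\<Sum>i<N. y t i) \<le> - (\<Sum>i<N. y 0 i)"
    by (rule decr_lemma[where f="\<lambda>s. - (\<Sum>i<N. y s i)", OF d2]) (use t in auto)
  ultimately show ?thesis by linarith
qed

lemma exp_decay:
  fixes W W' :: "real \<Rightarrow> real"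
  assumes d: "\<And>t. t \<ge> 0 \<Longrightarrow> (W has_real_derivative W' t) (at t within {0..})"
    and le: "\<And>t. t \<ge> 0 \<Longrightarrow> W' t \<le> - a * W t" and t: "t \<ge> 0"
  shows "W t \<le> W 0 * exp (- a * t)"
proof -
  have d': "\<And>t. t \<ge> 0 \<Longrightarrow> ((\<lambda>s. W s * exp (a * s)) has_real_derivative (W' t * exp (a*t) + W t * (a * exp (a * t)))) (at t within {0..})"
    using d by (auto intro!: derivative_eq_intros)
  have n: "\<And>t. t \<ge> 0 \<Longrightarrow> W' t * exp (a*t) + W t * (a * exp (a * t)) \<le> 0"
  proof -
    fix t :: real assume "t \<ge> 0"
    then have "W' t + a * W t \<le> 0" using le by fastforce
    then have "(W' t + a * W t) * exp (a*t) \<le> 0" by (simp add: mult_nonpos_nonneg)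
    then show "W' t * exp (a*t) + W t * (a * exp (a * t)) \<le> 0" by (simp add: algebra_simps)
  qed
  have "W t * exp (a * t) \<le> W 0 * exp (a * 0)" by (rule decr_lemma[OF d' n]) (use t in auto)
  then have "W t * exp (a * t) \<le> W 0" by simp
  then have "W t * exp (a * t) * exp (- a * t) \<le> W 0 * exp (- a * t)"
    by (simp add: mult_right_mono)
  then show ?thesis by (simp add: mult.assoc flip: exp_add)
qed

lemma poincare:
  fixes z :: "nat \<Rightarrow> real"
  assumes N: "N \<ge> 1" and z0: "(\<Sum>i<N. z i) = 0"
  shows "(\<Sum>i<N. (z i)^2) \<le> real N ^ 2 * (\<Sum>i<N. (z (Suc i mod N) - z i)^2)"
proof -
  define T where "T = (\<Sum>l<N. \<bar>z (Suc l mod N) - z l\<bar>)"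
  define D where "D = (\<Sum>i<N. (z (Suc i mod N) - z i)^2)"
  have T0: "T \<ge> 0" unfolding T_def by (simp add: sum_nonneg)
  have tele: "\<bar>z i - z k\<bar> \<le> T" if "k \<le> i" "i < N" for i k
  proof -
    have "z i - z k = (\<Sum>l=k..<i. z (Suc l) - z l)" using sum_Suc_diff'[OF that(1), of z] by simp
    also have "\<dots> = (\<Sum>l=k..<i. z (Suc l mod N) - z l)"
      by (rule sum.cong) (use that in auto)
    finally have "\<bar>z i - z k\<bar> \<le> (\<Sum>l=k..<i. \<bar>z (Suc l mod N) - z l\<bar>)"
      by (metis sum_abs)
    also have "\<dots> \<le> T" unfolding T_def by (rule sum_mono2) (use that in auto)
    finally show ?thesis .
  qed
  have pair: "\<bar>z i - z k\<bar> \<le> T" if "i < N" "k < N" for i k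
  proof (cases "k \<le> i")
    case True then show ?thesis using tele that by auto
  next
    case False then show ?thesis using tele[of i k] that by (metis abs_minus_commute less_imp_le_nat not_le tele)
  qed
  have zi: "\<bar>z i\<bar> \<le> T" if "i < N" for i
  proof -
    have "(\<Sum>k<N. z i - z k) = real N * z i" using z0 by (simp add: sum_subtractf)
    then have "real N * \<bar>z i\<bar> = \<bar>\<Sum>k<N. z i - z k\<bar>" by (simp add: abs_mult)
    also have "\<dots> \<le> (\<Sum>k<N. \<bar>z i - z k\<bar>)" by (rule sum_abs)
    also have "\<dots> \<le> (\<Sum>k<N. T)" by (rule sum_mono) (use pair that in auto)
    also have "\<dots> = real N * T" by simp
    finally show ?thesis using N by simp
  qed
  have TD: "T^2 \<le> real N * D"
    using sum_squared_le_sum_of_squares[of "\<lambda>l. \<bar>z (Suc l mod N) - z l\<bar>" "{..<N}"]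
    unfolding T_def D_def by (simp add: mult.commute)
  have "(\<Sum>i<N. (z i)^2) \<le> (\<Sum>i<N. T^2)"
  proof (rule sum_mono)
    fix i assume "i \<in> {..<N}"
    then have "\<bar>z i\<bar> \<le> T" using zi by simp
    then show "(z i)^2 \<le> T^2" by (metis abs_ge_zero power2_abs power_mono)
  qed
  also have "\<dots> = real N * T^2" by simp
  also have "\<dots> \<le> real N * (real N * D)" using TD by (simp add: mult_left_mono)
  finally show ?thesis unfolding D_def by (simp add: power2_eq_square mult.assoc)
qed

lemma pmod_lattice:
  fixes L :: real and N :: nat and a :: int
  assumes L: "L > 0" and N: "N \<ge> 1"
  shows "pmod (real_of_int a * L / real N) L = real_of_int (a mod int N) * L / real N"
proof -
  have e: "real_of_int a * L / real N / L = real_of_int a / real_of_int (int N)" using L by simp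
  have f: "\<lfloor>real_of_int a * L / real N / L\<rfloor> = a div int N" unfolding e by (rule floor_divide_of_int_eq)
  have a: "real_of_int a = real_of_int (int N) * real_of_int (a div int N) + real_of_int (a mod int N)"
    by (metis div_mult_mod_eq mult.commute of_int_add of_int_mult)
  show ?thesis unfolding pmod_def f using N
    by (subst a) (simp add: field_simps)
qed

lemma dist_bij_row:
  assumes i: "i < N"
  shows "bij_betw (\<lambda>j. nat ((int j - int i) mod int N)) {..<N} {..<N}"
proof -
  let ?f = "\<lambda>j. nat ((int j - int i) mod int N)"
  have sub: "?f ` {..<N} \<subseteq> {..<N}"
  proof (rule image_subsetI)
    fix x assume "x \<in> {..<N}"
    have "0 < int N" using i by simp
    then have "0 \<le> (int x - int i) mod int N" "(int x - int i) mod int N < int N" by simp_all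
    then show "nat ((int x - int i) mod int N) \<in> {..<N}" by (simp add: nat_less_iff)
  qed
  have inj: "inj_on ?f {..<N}"
  proof (rule inj_onI)
    fix x y assume x: "x \<in> {..<N}" and y: "y \<in> {..<N}" and e: "?f x = ?f y"
    have N0: "0 < int N" using i by simp
    have m: "0 \<le> (int x - int i) mod int N" "0 \<le> (int y - int i) mod int N" using N0 by simp_all
    have "int (nat ((int x - int i) mod int N)) = int (nat ((int y - int i) mod int N))" using e by simp
    then have h: "(int x - int i) mod int N = (int y - int i) mod int N" using m by simp
    have "((int x - int i) + int i) mod int N = ((int y - int i) + int i) mod int N"
      by (rule mod_add_cong[OF h refl])
    then have "int x mod int N = int y mod int N" by simp
    then show "x = y" using x y by simp
  qed
  show ?thesis unfolding bij_betw_def using inj endo_inj_surj[OF _ sub inj] by simp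
qed

lemma dist_bij_col:
  assumes j: "j < N"
  shows "bij_betw (\<lambda>i. nat ((int j - int i) mod int N)) {..<N} {..<N}"
proof -
  let ?f = "\<lambda>i. nat ((int j - int i) mod int N)"
  have sub: "?f ` {..<N} \<subseteq> {..<N}"
  proof (rule image_subsetI)
    fix x assume "x \<in> {..<N}"
    have "0 < int N" using j by simp
    then have "0 \<le> (int j - int x) mod int N" "(int j - int x) mod int N < int N" by simp_all
    then show "nat ((int j - int x) mod int N) \<in> {..<N}" by (simp add: nat_less_iff)
  qed
  have inj: "inj_on ?f {..<N}"
  proof (rule inj_onI)
    fix x y assume x: "x \<in> {..<N}" and y: "y \<in> {..<N}" and e: "?f x = ?f y"
    have N0: "0 < int N" using j by simp
    have m: "0 \<le> (int j - int x) mod int N" "0 \<le> (int j - int y) mod int N" using N0 by simp_all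
    have "int (nat ((int j - int x) mod int N)) = int (nat ((int j - int y) mod int N))" using e by simp
    then have h: "(int j - int x) mod int N = (int j - int y) mod int N" using m by simp
    have "(int j - (int j - int x)) mod int N = (int j - (int j - int y)) mod int N"
      by (rule mod_diff_cong[OF refl h])
    then have "int x mod int N = int y mod int N" by simp
    then show "x = y" using x y by simp
  qed
  show ?thesis unfolding bij_betw_def using inj endo_inj_surj[OF _ sub inj] by simp
qed

lemma reidx_row:
  assumes "i < N"
  shows "(\<Sum>j<N. g (nat ((int j - int i) mod int N))) = (\<Sum>h<N. g h)"
  using sum.reindex_bij_betw[OF dist_bij_row[OF assms], of g] by simp

lemma reidx_col:
  assumes "j < N"
  shows "(\<Sum>i<N. g (nat ((int j - int i) mod int N))) = (\<Sum>h<N. g h)"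
  using sum.reindex_bij_betw[OF dist_bij_col[OF assms], of g] by simp

theorem mainTheorem1:
  fixes K :: "real \<Rightarrow> real" and L R vd w :: real and N :: nat and Xbar :: "nat \<Rightarrow> real"
  assumes L_pos: "L > 0" and N_pos: "N \<ge> 1" and vd_pos: "vd > 0"
    and R_bounds: "0 < R" "R < L"
    and supp: "closure {z. K z \<noteq> 0} = {0..R}"
    and C2: "\<forall>z\<in>{0<..<R}. K field_differentiable (at z) \<and> deriv K field_differentiable (at z)"
    and C2_cont: "continuous_on {0<..<R} (deriv (deriv K))"
    and bdd: "\<exists>M. \<forall>z\<in>{0<..<R}. \<bar>K z\<bar> \<le> M \<and> \<bar>deriv (deriv K) z\<bar> \<le> M"
    and K_pos: "\<forall>z\<in>{0<..<R}. K z > 0"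
    and K'_neg: "\<forall>z\<in>{0<..<R}. deriv K z < 0"
    and K_ends: "K 0 = 0" "K R = 0"
    and K_0plus: "\<exists>l>0. (K \<longlongrightarrow> l) (at_right 0)"
    and lattice: "\<forall>i<N. Xbar i = Xbar 0 + real i * L / real N"
    and w_def: "w = vd - (\<Sum>h=1..N-1. K (real h * L / real N))"
  shows "(\<forall>i<N. \<forall>t. ((\<lambda>s. Xbar i + w * s) has_real_derivative
              (vd - (\<Sum>j<N. K (pmod ((Xbar j + w * t) - (Xbar i + w * t)) L)))) (at t))
         \<and> lin_stable K R L N Xbar
         \<and> (R > L / real N \<longrightarrow> lin_attractive K R L N Xbar)"
proof -
  have N1: "N \<ge> 1" using N_pos .
  have N0: "0 < int N" using N1 by simp
  define d where "d i j = nat ((int j - int i) mod int N)" for i j :: nat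
  have pm: "pmod (Xbar j - Xbar i) L = real (d i j) * L / real N" if "i<N" "j<N" for i j
  proof -
    have "Xbar j - Xbar i = (real j - real i) * L / real N"
      using lattice[rule_format, OF that(1)] lattice[rule_format, OF that(2)]
      by (simp add: diff_divide_distrib left_diff_distrib)
    then have "Xbar j - Xbar i = real_of_int (int j - int i) * L / real N" by simp
    moreover have "0 \<le> (int j - int i) mod int N" using N0 by simp
    ultimately show ?thesis unfolding d_def using pmod_lattice[OF L_pos N1, of "int j - int i"]
      by simp
  qed
  have P1: "\<forall>i<N. \<forall>t. ((\<lambda>s. Xbar i + w * s) has_real_derivative
              (vd - (\<Sum>j<N. K (pmod ((Xbar j + w * t) - (Xbar i + w * t)) L)))) (at t)"
  proof (intro allI impI)
    fix i t assume i: "i < N"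
    have "(\<Sum>j<N. K (pmod ((Xbar j + w * t) - (Xbar i + w * t)) L)) = (\<Sum>j<N. K (real (d i j) * L / real N))"
      by (rule sum.cong) (use pm i in auto)
    also have "\<dots> = (\<Sum>h<N. K (real h * L / real N))" unfolding d_def
      by (rule reidx_row[OF i, where g="\<lambda>h. K (real h * L / real N)"])
    also have "\<dots> = (\<Sum>h=1..N-1. K (real h * L / real N))"
    proof -
      have "{..<N} = insert 0 {1..N-1}" using N1 by auto
      then show ?thesis using K_ends(1) by simp
    qed
    finally have e: "vd - (\<Sum>j<N. K (pmod ((Xbar j + w * t) - (Xbar i + w * t)) L)) = w" using w_def by simp
    have "((\<lambda>s. Xbar i + w * s) has_real_derivative w) (at t)" by (auto intro!: derivative_eq_intros)
    then show "((\<lambda>s. Xbar i + w * s) has_real_derivative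
              (vd - (\<Sum>j<N. K (pmod ((Xbar j + w * t) - (Xbar i + w * t)) L)))) (at t)" unfolding e .
  qed
  define g where "g h = - lin_coef K R (real h * L / real N)" for h :: nat
  define c where "c i j = g (d i j)" for i j
  define S where "S = (\<Sum>h<N. g h)"
  have row: "\<And>i. i<N \<Longrightarrow> (\<Sum>j<N. c i j) = S" unfolding c_def d_def S_def by (rule reidx_row)
  have col: "\<And>j. j<N \<Longrightarrow> (\<Sum>i<N. c i j) = S" unfolding c_def d_def S_def by (rule reidx_col)
  have g_nonneg: "g h \<ge> 0" for h unfolding g_def lin_coef_def using K'_neg by (auto simp: less_imp_le)
  have c_nonneg: "c i j \<ge> 0" for i j unfolding c_def by (rule g_nonneg)
  have ode: "((\<lambda>s. y s i) has_real_derivative (\<Sum>j<N. c i j * (y t j - y t i))) (at t within {0..})"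
    if ls: "lin_sol K R L N Xbar y" and t: "t \<ge> 0" and i: "i < N" for y t i
  proof -
    have "- (\<Sum>j<N. lin_coef K R (pmod (Xbar j - Xbar i) L) * (y t j - y t i)) = (\<Sum>j<N. c i j * (y t j - y t i))"
      unfolding sum_negf[symmetric] by (rule sum.cong) (use pm i in \<open>auto simp: c_def g_def\<close>)
    then show ?thesis using ls t i unfolding lin_sol_def by metis
  qed
  have Qnn: "(\<Sum>i<N. \<Sum>j<N. c i j * (x j - x i)^2) \<ge> 0" for x
    by (intro sum_nonneg mult_nonneg_nonneg c_nonneg) simp
  have stab: "lin_stable K R L N Xbar"
    unfolding lin_stable_def
  proof (intro allI impI)
    fix \<epsilon> :: real assume eps: "\<epsilon> > 0"
    show "\<exists>\<delta>>0. \<forall>y. lin_sol K R L N Xbar y \<and> (\<forall>i<N. \<bar>y 0 i\<bar> < \<delta>) \<longrightarrow> (\<forall>t\<ge>0. \<forall>i<N. \<bar>y t i\<bar> < \<epsilon>)"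
    proof (intro exI[of _ "\<epsilon> / real N"] conjI allI impI)
      show "\<epsilon> / real N > 0" using eps N1 by simp
      fix y :: "real \<Rightarrow> nat \<Rightarrow> real" and t :: real and i :: nat assume H: "lin_sol K R L N Xbar y \<and> (\<forall>i<N. \<bar>y 0 i\<bar> < \<epsilon> / real N)"
        and t: "t \<ge> 0" and i: "i < N"
      define V where "V s = (\<Sum>i<N. (y s i)^2)" for s
      have Vd: "(V has_real_derivative (- (\<Sum>i<N. \<Sum>j<N. c i j * (y t j - y t i)^2))) (at t within {0..})"
        if "t \<ge> 0" for t
        unfolding V_def by (rule energy_deriv[OF row col ode[OF conjunct1[OF H]] that])
      have Vdec: "V t \<le> V 0"
        by (rule decr_lemma[OF Vd]) (use t Qnn in auto)
      have "V 0 < (\<Sum>i<N. (\<epsilon> / real N)^2)" unfolding V_def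
      proof (rule sum_strict_mono)
        have "0 \<in> {..<N}" using N1 by simp
        then show "{..<N} \<noteq> {}" by blast
        fix i assume "i \<in> {..<N}"
        then have "\<bar>y 0 i\<bar> < \<epsilon> / real N" using H by auto
        then have "\<bar>y 0 i\<bar>^2 < (\<epsilon> / real N)^2" by (rule power_strict_mono) auto
        then show "(y 0 i)^2 < (\<epsilon> / real N)^2" by simp
      qed simp
      also have "\<dots> = real N * (\<epsilon> / real N)^2" by simp
      also have "\<dots> = \<epsilon>^2 / real N" using N1 by (simp add: power2_eq_square)
      also have "\<dots> \<le> \<epsilon>^2"
      proof -
        have "\<epsilon>^2 * 1 \<le> \<epsilon>^2 * real N" by (rule mult_left_mono) (use N1 in auto)
        then show ?thesis using N1 by (simp add: divide_le_eq)
      qed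
      finally have V0: "V 0 < \<epsilon>^2" .
      have "(y t i)^2 \<le> V t" unfolding V_def
        by (rule member_le_sum) (use i in auto)
      then have "\<bar>y t i\<bar>^2 < \<epsilon>^2" using Vdec V0 by simp
      then show "\<bar>y t i\<bar> < \<epsilon>" using eps by (meson less_imp_le power_less_imp_less_base)
    qed
  qed
  have att: "R > L / real N \<longrightarrow> lin_attractive K R L N Xbar"
  proof
    assume RL: "R > L / real N"
    have N2: "N \<ge> 2"
    proof (rule ccontr)
      assume "\<not> N \<ge> 2"
      then have "N = 1" using N1 by simp
      then show False using RL R_bounds by simp
    qed
    define b where "b = g 1"
    have LN: "0 < L / real N" using L_pos N1 by simp
    have b: "b > 0" unfolding b_def g_def lin_coef_def using LN RL K'_neg by auto
    have dnext: "d i (Suc i mod N) = 1" if i: "i < N" for i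
    proof (cases "Suc i < N")
      case True
      then have "Suc i mod N = Suc i" by simp
      then show ?thesis unfolding d_def using N2 by simp
    next
      case False
      then have "Suc i = N" using i by simp
      then have e: "Suc i mod N = 0" "int i = int N - 1" by auto
      have "(1 - int N) mod int N = 1"
      proof -
        have "(1 - int N) mod int N = (1 + (-1) * int N) mod int N" by simp
        also have "\<dots> = 1 mod int N" by (rule mod_mult_self1)
        also have "\<dots> = 1" using N2 by simp
        finally show ?thesis .
      qed
      then show ?thesis unfolding d_def e by simp
    qed
    have cnext: "c i (Suc i mod N) = b" if "i < N" for i
      unfolding c_def b_def using dnext[OF that] by simp
    show "lin_attractive K R L N Xbar"
      unfolding lin_attractive_def
    proof (intro allI impI)
      fix y assume ls: "lin_sol K R L N Xbar y"
      note odey = ode[OF ls]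
      define \<mu> where "\<mu> = (\<Sum>i<N. y 0 i) / real N"
      define z where "z s i = y s i - \<mu>" for s i
      have odez: "((\<lambda>s. z s i) has_real_derivative (\<Sum>j<N. c i j * (z t j - z t i))) (at t within {0..})"
        if "t \<ge> 0" "i < N" for t i
      proof -
        have "((\<lambda>s. y s i - \<mu>) has_real_derivative (\<Sum>j<N. c i j * (y t j - y t i)) - 0) (at t within {0..})"
          by (rule DERIV_diff[OF odey[OF that] DERIV_const])
        then show ?thesis by (simp add: z_def)
      qed
      have zsum: "(\<Sum>i<N. z t i) = 0" if "t \<ge> 0" for t
      proof -
        have "(\<Sum>i<N. y t i) = (\<Sum>i<N. y 0 i)" by (rule mean_deriv[OF row col odey that])
        then show ?thesis unfolding z_def \<mu>_def using N1 by (simp add: sum_subtractf)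
      qed
      define W where "W s = (\<Sum>i<N. (z s i)^2)" for s
      define a where "a = b / real N ^ 2"
      have a: "a > 0" unfolding a_def using b N1 by simp
      have Wd: "(W has_real_derivative (- (\<Sum>i<N. \<Sum>j<N. c i j * (z t j - z t i)^2))) (at t within {0..})"
        if "t \<ge> 0" for t
        unfolding W_def by (rule energy_deriv[OF row col odez that])
      have Wle: "- (\<Sum>i<N. \<Sum>j<N. c i j * (z t j - z t i)^2) \<le> - a * W t" if t: "t \<ge> 0" for t
      proof -
        have "(\<Sum>i<N. c i (Suc i mod N) * (z t (Suc i mod N) - z t i)^2) \<le> (\<Sum>i<N. \<Sum>j<N. c i j * (z t j - z t i)^2)"
        proof (rule sum_mono)
          fix i assume "i \<in> {..<N}"
          then have "Suc i mod N \<in> {..<N}" using N1 by simp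
          then show "c i (Suc i mod N) * (z t (Suc i mod N) - z t i)^2 \<le> (\<Sum>j<N. c i j * (z t j - z t i)^2)"
            by (rule member_le_sum[where f="\<lambda>j. c i j * (z t j - z t i)^2"]) (auto intro: mult_nonneg_nonneg c_nonneg)
        qed
        also have "(\<Sum>i<N. c i (Suc i mod N) * (z t (Suc i mod N) - z t i)^2) = b * (\<Sum>i<N. (z t (Suc i mod N) - z t i)^2)"
          by (simp add: cnext sum_distrib_left)
        finally have A: "b * (\<Sum>i<N. (z t (Suc i mod N) - z t i)^2) \<le> (\<Sum>i<N. \<Sum>j<N. c i j * (z t j - z t i)^2)" .
        have P: "W t \<le> real N ^ 2 * (\<Sum>i<N. (z t (Suc i mod N) - z t i)^2)"
          unfolding W_def by (rule poincare[OF N1 zsum[OF t]])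
        have "a * W t \<le> a * (real N ^ 2 * (\<Sum>i<N. (z t (Suc i mod N) - z t i)^2))"
          using P a by (simp add: mult_left_mono)
        also have "\<dots> = b * (\<Sum>i<N. (z t (Suc i mod N) - z t i)^2)" unfolding a_def using N1 by simp
        finally show ?thesis using A by simp
      qed
      have Wdec: "W t \<le> W 0 * exp (- a * t)" if "t \<ge> 0" for t
        by (rule exp_decay[OF Wd Wle that])
      have lim0: "((\<lambda>t. sqrt (W 0 * exp (- a * t))) \<longlongrightarrow> 0) at_top"
      proof -
        have "filterlim (\<lambda>t. a * t) at_top at_top"
          by (rule filterlim_tendsto_pos_mult_at_top[OF tendsto_const a filterlim_ident])
        then have "filterlim (\<lambda>t. - (a * t)) at_bot at_top" by (simp add: filterlim_uminus_at_top)
        then have "((\<lambda>t. exp (- (a * t))) \<longlongrightarrow> 0) at_top" by (rule filterlim_compose[OF exp_at_bot])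
        then have "((\<lambda>t. exp (- a * t)) \<longlongrightarrow> 0) at_top" by simp
        then have "((\<lambda>t. W 0 * exp (- a * t)) \<longlongrightarrow> W 0 * 0) at_top" by (intro tendsto_mult tendsto_const)
        then have "((\<lambda>t. sqrt (W 0 * exp (- a * t))) \<longlongrightarrow> sqrt (W 0 * 0)) at_top" by (rule tendsto_real_sqrt)
        then show ?thesis by simp
      qed
      show "\<exists>c. \<forall>i<N. ((\<lambda>t. y t i) \<longlongrightarrow> c) at_top"
      proof (intro exI[of _ \<mu>] allI impI)
        fix i assume i: "i < N"
        have "((\<lambda>t. z t i) \<longlongrightarrow> 0) at_top"
        proof (rule Lim_null_comparison[OF _ lim0])
          show "\<forall>\<^sub>F t in at_top. norm (z t i) \<le> sqrt (W 0 * exp (- a * t))"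
            using eventually_ge_at_top[of "0::real"]
          proof eventually_elim
            case (elim t)
            have "(z t i)^2 \<le> W t" unfolding W_def by (rule member_le_sum) (use i in auto)
            also have "\<dots> \<le> W 0 * exp (- a * t)" using Wdec elim by simp
            finally show ?case by (simp add: real_le_rsqrt)
          qed
        qed
        then have "((\<lambda>t. z t i + \<mu>) \<longlongrightarrow> 0 + \<mu>) at_top" by (intro tendsto_add tendsto_const)
        then show "((\<lambda>t. y t i) \<longlongrightarrow> \<mu>) at_top" by (simp add: z_def)
      qed
    qed
  qed
  show ?thesis using P1 stab att by blast
qed

end
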